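(* If $G$ is a strongly regular graph with parameters $(n,r,e,f)$ and $n \ge 3$, then $\lambda_3(G) < \frac{n}{3}$.
   Context: A graph $G$ is strongly regular with parameters $(n,r,e,f)$ if it has $n$ vertices, is $r$-regular, every two adjacent vertices have exactly $e$ common neighbours, and every two distinct non-adjacent vertices have exactly $f$ common neighbours (disconnected graphs and graphs with disconnected complement are allowed). $\lambda_3(G)$ is the third largest eigenvalue (with multiplicity) of the adjacency matrix of $G$. *)

theory Defs
  imports "Jordan_Normal_Form.Char_Poly"
begin

definition simple_graph :: "nat \<Rightarrow> (nat \<Rightarrow> nat \<Rightarrow> bool) \<Rightarrow> bool" where
  "simple_graph n E \<longleftrightarrow> (\<forall>i<n. \<forall>j<n. E i j \<longleftrightarrow> E j i) \<and> (\<forall>i<n. \<not> E i i)"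

definition neighbours :: "nat \<Rightarrow> (nat \<Rightarrow> nat \<Rightarrow> bool) \<Rightarrow> nat \<Rightarrow> nat set" where
  "neighbours n E i = {k. k < n \<and> E i k}"

definition strongly_regular ::
  "nat \<Rightarrow> (nat \<Rightarrow> nat \<Rightarrow> bool) \<Rightarrow> nat \<Rightarrow> nat \<Rightarrow> nat \<Rightarrow> bool" where
  "strongly_regular n E r e f \<longleftrightarrow>
     simple_graph n E \<and>
     (\<forall>i<n. card (neighbours n E i) = r) \<and>
     (\<forall>i<n. \<forall>j<n. i \<noteq> j \<longrightarrow> E i j \<longrightarrow>
        card (neighbours n E i \<inter> neighbours n E j) = e) \<and>
     (\<forall>i<n. \<forall>j<n. i \<noteq> j \<longrightarrow> \<not> E i j \<longrightarrow>
        card (neighbours n E i \<inter> neighbours n E j) = f)"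

definition adj_matrix :: "nat \<Rightarrow> (nat \<Rightarrow> nat \<Rightarrow> bool) \<Rightarrow> real mat" where
  "adj_matrix n E = mat n n (\<lambda>(i, j). if E i j then 1 else 0)"

text \<open>Eigenvalues with multiplicity (roots of the characteristic polynomial,
  which splits over the reals for a symmetric real matrix), in non-increasing order.\<close>
definition eigenvalues_desc :: "real mat \<Rightarrow> real list" where
  "eigenvalues_desc A = rev (sorted_list_of_multiset (proots (char_poly A)))"

definition lambda3 :: "real mat \<Rightarrow> real" where
  "lambda3 A = eigenvalues_desc A ! 2"

end

theory Submission
  imports Defs "Jordan_Normal_Form.Schur_Decomposition"
begin


lemma rat_root_int:
  fixes u :: real and k R :: int
  assumes "u \<in> \<rat>" "u^2 + of_int k*u - of_int R = 0"
  shows "u \<in> \<int>"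
proof -
  obtain a b :: int where b: "b > 0" "coprime a b" "u = of_int a / of_int b"
    using Rats_cases'[OF assms(1)] by metis
  have bne: "(of_int b::real) \<noteq> 0" using b by simp
  have "(of_int a / of_int b)^2 + of_int k * (of_int a / of_int b) - of_int R = (0::real)"
    using assms(2) b by simp
  hence "(of_int a)^2 + of_int k * of_int a * of_int b - of_int R * (of_int b)^2 = (0::real)"
    using bne by (simp add: field_simps power2_eq_square)
  hence "of_int (a^2 + k*a*b - R*b^2) = (0::real)" by simp
  hence eq: "a^2 = b * (R*b - k*a)" by (simp only: of_int_eq_0_iff) (simp add: algebra_simps power2_eq_square)
  hence "b dvd a^2" by simp
  moreover have "coprime b (a^2)" using b(2) by (simp add: coprime_commute)
  ultimately have "b dvd 1" using coprime_dvd_mult_left_iff[of b "a^2" 1] by simp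
  hence "b = 1" using b(1) by simp
  thus ?thesis using b(3) by simp
qed

lemma sum_list_q2:
  fixes L :: "real list"
  shows "sum_list (map (\<lambda>x. x^2 - k*x - R) L) = sum_list (map (\<lambda>x. x^2) L) - k * sum_list L - R * length L"
  by (induction L) (auto simp: algebra_simps)

lemma sum_list_g:
  fixes L :: "real list"
  shows "sum_list (map (\<lambda>x. x*(x - t)) L) = sum_list (map (\<lambda>x. x^2) L) - t * sum_list L"
  by (induction L) (auto simp: algebra_simps power2_eq_square)

lemma sum_list_nonneg':
  fixes g :: "real \<Rightarrow> real"
  assumes "\<forall>x\<in>set L. g x \<ge> 0"
  shows "0 \<le> sum_list (map g L)"
  using assms by (induction L) auto

lemma sum_list_nonneg_ge:
  fixes g :: "real \<Rightarrow> real"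
  assumes "\<forall>x\<in>set L. g x \<ge> 0" "x \<in> set L"
  shows "g x \<le> sum_list (map g L)"
  using assms by (induction L) (auto intro: sum_list_nonneg' add_increasing2 add_increasing)

lemma sum_list_nonneg_zero:
  fixes g :: "real \<Rightarrow> real"
  assumes "\<forall>x\<in>set L. g x \<ge> 0" "sum_list (map g L) = 0" "x \<in> set L"
  shows "g x = 0"
proof -
  have "g x \<le> 0" using sum_list_nonneg_ge[OF assms(1,3)] assms(2) by simp
  moreover have "0 \<le> g x" using assms(1,3) by auto
  ultimately show ?thesis by linarith
qed

lemma three_le_sum:
  fixes g :: "real \<Rightarrow> real"
  assumes "\<forall>x\<in>set rest. g x \<ge> 0"
  shows "g a + g b + g c \<le> sum_list (map g (a#b#c#rest))"
  using sum_list_nonneg'[OF assms] by simp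

lemma final_arith:
  fixes L :: "real list" and n r e' f' :: nat and k R :: int
  assumes len: "length L = n" and n3: "n \<ge> 3"
    and srt: "sorted_wrt (\<lambda>x y. y \<le> x) L"
    and s1: "sum_list L = 0" and s2: "sum_list (map (\<lambda>x. x^2) L) = real n * real r"
    and rin: "real r \<in> set L"
    and roots: "\<forall>x\<in>set L. x = real r \<or> x^2 - real_of_int k * x - real_of_int R = 0"
    and kdef: "k = int e' - int f'" and Rdef: "R = int r - int f'"
    and fr: "f' \<le> r" and er: "r \<ge> 1 \<Longrightarrow> e' + 1 \<le> r"
  shows "L!2 < real n / 3"
proof (rule ccontr)
  assume "\<not> L!2 < real n / 3"
  hence c3: "L!2 \<ge> real n / 3" by simp
  obtain a L1 where L1: "L = a#L1" "2 \<le> length L1"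
    using Suc_le_length_iff[of 2 L] len n3 by auto
  obtain b L2 where L2: "L1 = b#L2" "1 \<le> length L2"
    using Suc_le_length_iff[of 1 L1] L1 by auto
  obtain c rest where L3: "L2 = c#rest"
    using L2 by (cases L2) auto
  have L: "L = a#b#c#rest" using L1 L2 L3 by simp
  have cdef: "L!2 = c" using L by simp
  have lenr: "length rest = n - 3" using L len by simp
  have ba: "b \<le> a" and cb: "c \<le> b" and restc: "\<forall>x\<in>set rest. x \<le> c"
    using srt unfolding L by auto
  have amax: "\<forall>x\<in>set L. x \<le> a" using srt unfolding L by auto
  have n1: "real n / 3 \<ge> 1" using n3 by simp
  have cge: "c \<ge> real n / 3" using c3 cdef by simp
  have cpos: "c > 0" using cge n1 by linarith
  have bpos: "b > 0" "a > 0" using cpos cb ba by linarith+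
  show False
  proof (cases "r = 0")
    case True
    have "c^2 \<le> sum_list (map (\<lambda>x. x^2) L)"
      by (rule sum_list_nonneg_ge) (auto simp: L)
    hence "c^2 \<le> 0" using s2 True by simp
    moreover have "c^2 > 0" using cpos by simp
    ultimately show False by linarith
  next
    case False
    hence r1: "r \<ge> 1" by simp
    have er': "real e' + 1 \<le> real r" using er[OF r1] by linarith
    have rpos: "real r > 0" using r1 by simp
    define Q where "Q = (real r)^2 - real_of_int k * real r - real_of_int R"
    have hQ: "Q = real r * (real r - real e' - 1) + real f' * (real r + 1)"
      unfolding Q_def kdef Rdef using fr by (simp add: algebra_simps power2_eq_square of_nat_diff)
    have Qge: "Q \<ge> real f' * (real r + 1)"
      using hQ er' rpos by (simp add: mult_nonneg_nonneg)
    have hq: "\<forall>x\<in>set L. x^2 - real_of_int k * x - real_of_int R = (if x = real r then Q else 0)"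
      using roots unfolding Q_def by auto
    have sumq: "sum_list (map (\<lambda>x. x^2 - real_of_int k * x - real_of_int R) L) = real n * real f'"
      unfolding sum_list_q2 s1 s2 len Rdef using fr by (simp add: algebra_simps of_nat_diff)
    show False
    proof (cases "f' = 0")
      case True
      have Q0: "Q \<ge> 0" using Qge True by simp
      have "\<forall>x\<in>set L. x^2 - real_of_int k * x - real_of_int R \<ge> 0" using hq Q0 by auto
      from sum_list_nonneg_zero[OF this _ rin] sumq True
      have "Q = 0" unfolding Q_def by simp
      hence "real r * (real r - real e' - 1) = 0" using hQ True by simp
      hence ee: "real e' = real r - 1" using rpos by simp
      have kk: "real_of_int k = real r - 1" "real_of_int R = real r" using kdef Rdef ee True by simp_all
      have two: "\<forall>x\<in>set L. x = real r \<or> x = -1"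
      proof
        fix x assume "x \<in> set L"
        hence "x = real r \<or> x^2 - (real r - 1) * x - real r = 0" using roots kk by auto
        moreover have "x^2 - (real r - 1) * x - real r = (x - real r) * (x + 1)"
          by (simp add: algebra_simps power2_eq_square)
        ultimately show "x = real r \<or> x = -1" by auto
      qed
      have abc: "a = real r" "b = real r" "c = real r"
        using two bpos cpos unfolding L by auto
      have gs: "sum_list (map (\<lambda>x. x*(x - (-1))) L) = real n * real r"
        using sum_list_g[of "-1" L] s1 s2 by simp
      have "\<forall>x\<in>set rest. x*(x - (-1)) \<ge> 0" using two rpos unfolding L by auto
      from three_le_sum[OF this, of a b c] gs abc L
      have "3 * (real r * (real r + 1)) \<le> real n * real r" by simp
      hence "real r * (3 * (real r + 1)) \<le> real r * real n" by (simp add: algebra_simps)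
      hence "3 * (real r + 1) \<le> real n" using rpos by (simp only: mult_le_cancel_left_pos)
      thus False using cge abc by simp
    next
      case False
      hence f1: "real f' \<ge> 1" by simp
      have Rnn: "real_of_int R \<ge> 0" using Rdef fr by simp
      define D where "D = (real_of_int k)^2 + 4 * real_of_int R"
      have Dnn: "D \<ge> 0" unfolding D_def using Rnn by simp
      define sq where "sq = sqrt D"
      have sq2: "sq^2 = D" "sq \<ge> 0" unfolding sq_def using Dnn by simp_all
      define s where "s = (real_of_int k + sq) / 2"
      define t where "t = (real_of_int k - sq) / 2"
      have st1: "s * t = ((real_of_int k)^2 - sq^2) / 4"
        unfolding s_def t_def by (simp add: field_simps power2_eq_square)
      have st: "s * t = - real_of_int R" "s + t = real_of_int k" "t \<le> s"
        using st1 sq2 unfolding D_def s_def t_def by (auto simp: field_simps)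
      have fac: "\<And>x. x^2 - real_of_int k * x - real_of_int R = (x - s) * (x - t)"
      proof -
        fix x
        have "(x - s) * (x - t) = x^2 - (s + t) * x + s * t" by (simp add: algebra_simps power2_eq_square)
        thus "x^2 - real_of_int k * x - real_of_int R = (x - s) * (x - t)" using st by simp
      qed
      have tnp: "t \<le> 0"
      proof (rule ccontr)
        assume "\<not> t \<le> 0" hence "t > 0" by simp
        hence "s * t > 0" using st(3) by simp
        thus False using st(1) Rnn by simp
      qed
      have snn: "s \<ge> 0"
      proof (rule ccontr)
        assume "\<not> s \<ge> 0" hence "s < 0" by simp
        hence "s * t > 0" using st(3) by (simp add: mult_neg_neg)
        thus False using st(1) Rnn by simp
      qed
      have Qpos: "Q > 0" using Qge f1 rpos
        by (smt (verit) mult_less_cancel_left2 of_nat_0_le_iff)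
      have "Q = (real r - s) * (real r - t)" unfolding Q_def by (rule fac)
      moreover have "real r - t > 0" using tnp rpos by simp
      ultimately have rs: "real r > s" using Qpos
        by (smt (verit) mult_nonpos_nonneg)
      have three: "\<forall>x\<in>set L. x = real r \<or> x = s \<or> x = t"
        using roots fac by auto
      have gsum: "sum_list (map (\<lambda>x. x*(x - t)) L) = real n * real r"
        using sum_list_g[of t L] s1 s2 by simp
      have gnn: "\<forall>x\<in>set L. x*(x - t) \<ge> 0"
        using three tnp snn rpos by auto
      have gr: "real r * (real r - t) \<ge> (real r)^2"
        using tnp rpos by (simp add: power2_eq_square algebra_simps mult_nonpos_nonneg mult_nonneg_nonpos)
      have gs: "s * (s - t) \<ge> s^2"
        using tnp snn by (simp add: power2_eq_square algebra_simps mult_nonpos_nonneg mult_nonneg_nonpos)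
      have aeq: "a = real r"
        using amax rin three rs tnp rpos bpos unfolding L by force
      have bc: "b = real r \<or> b = s" "c = real r \<or> c = s"
        using three bpos cpos tnp unfolding L by auto
      have sn: "s \<ge> 0" using snn .
      show False
      proof (cases "c = real r")
        case True
        hence bb: "b = real r" using bc cb rs by auto
        have "\<forall>x\<in>set rest. x^2 - real_of_int k * x - real_of_int R \<ge> 0"
          using hq Qpos unfolding L by auto
        from three_le_sum[OF this, of a b c] sumq hq aeq bb True
        have "3 * Q \<le> real n * real f'" unfolding L by simp
        hence "3 * (real f' * (real r + 1)) \<le> real n * real f'" using Qge by linarith
        hence "real f' * (3 * (real r + 1)) \<le> real f' * real n" by (simp add: algebra_simps)
        hence "3 * (real r + 1) \<le> real n" using f1 by (simp only: mult_le_cancel_left_pos)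
        thus False using cge True by simp
      next
        case False
        hence cs: "c = s" using bc by auto
        have sge: "s \<ge> real n / 3" using cge cs by simp
        have s2ge: "s^2 \<ge> (real n / 3)^2" using sge n1 by (simp add: power_mono)
        have rgt: "real r > real n / 3" using rs sge by simp
        have restg: "\<forall>x\<in>set rest. x*(x - t) \<ge> 0" using gnn unfolding L by auto
        from three_le_sum[OF restg, of a b c] gsum L
        have top: "a*(a-t) + b*(b-t) + c*(c-t) \<le> real n * real r" by simp
        show False
        proof (cases "b = real r")
          case True
          have "real r*(real r - t) + real r*(real r - t) + s*(s-t) \<le> real n * real r"
            using top True aeq cs by simp
          hence "2 * (real r)^2 + s^2 \<le> real n * real r"
            using gr gs by linarith
          hence "2 * (real r)^2 - real n * real r + (real n / 3)^2 \<le> 0" using s2ge by linarith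
          moreover have "2 * (real r)^2 - real n * real r + (real n / 3)^2 = 2 * ((real r - real n / 3) * (real r - real n / 6))"
            by (simp add: algebra_simps power2_eq_square)
          moreover have "(real r - real n / 3) * (real r - real n / 6) > 0"
            using rgt n1 by (intro mult_pos_pos) auto
          ultimately show False by linarith
        next
          case False
          hence bs: "b = s" using bc by auto
          have restst: "\<forall>x\<in>set rest. x = s \<or> x = t"
            using three restc cs rs unfolding L by fastforce
          show False
          proof (cases "\<exists>x\<in>set rest. x = s")
            case True
            then obtain x where x: "x \<in> set rest" "x = s" by auto
            have "x*(x-t) \<le> sum_list (map (\<lambda>x. x*(x - t)) rest)"
              by (rule sum_list_nonneg_ge[OF restg x(1)])
            hence "a*(a-t) + b*(b-t) + c*(c-t) + x*(x-t) \<le> real n * real r"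
              using gsum L by simp
            hence "real r*(real r - t) + s*(s-t) + s*(s-t) + s*(s-t) \<le> real n * real r"
              using aeq bs cs x by simp
            hence "(real r)^2 + 3 * s^2 \<le> real n * real r"
              using gr gs by linarith
            hence "(real r)^2 + 3 * (real n / 3)^2 \<le> real n * real r" using s2ge by linarith
            moreover have "(real r)^2 + 3 * (real n / 3)^2 - real n * real r = (real r - real n / 2)^2 + (real n)^2 / 12"
              by (simp add: algebra_simps power2_eq_square)
            moreover have "(real n)^2 / 12 > 0" using n3 by simp
            ultimately show False
              by (smt (verit) zero_le_power2)
          next
            case False
            hence "\<forall>x\<in>set rest. x = t" using restst by auto
            hence rt: "rest = replicate (n-3) t" using lenr replicate_length_same[of rest t] by simp
            have E1: "real r + 2*s + real (n-3) * t = 0"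
              using s1 L aeq bs cs rt by (simp add: sum_list_replicate)
            have E2: "(real r)^2 + 2*s^2 + real (n-3) * t^2 = real n * real r"
              using s2 L aeq bs cs rt by (simp add: sum_list_replicate)
            define u where "u = - t"
            have unn: "u \<ge> 0" using tnp u_def by simp
            have su: "s = real_of_int k + u" using st(2) u_def by simp
            have uq: "u^2 + real_of_int k * u - real_of_int R = 0"
              using fac[of t] u_def by (simp add: power2_eq_square)
            have n3r: "real (n-3) = real n - 3" using n3 by (simp add: of_nat_diff)
            have E1': "real r + 2 * real_of_int k = (real n - 5) * u"
              using E1 su u_def n3r by (simp add: algebra_simps)
            have E1u: "real r + 2 * s = (real n - 3) * u"
              using E1 u_def n3r by (simp add: algebra_simps)
            have spos: "s > 0" using sge n1 by linarith
            show False
            proof (cases "n = 5")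
              case True
              have "real r + 2 * real_of_int k = 0" using E1' True by simp
              hence rk: "int r = - 2 * k" by linarith
              have "(real r)^2 + 2 * s^2 \<le> 5 * real r"
                using E2 True by (simp add: n3r) (smt (verit) zero_le_power2 mult_nonneg_nonneg)
              hence "(real r)^2 + 2 * (5/3)^2 \<le> 5 * real r" using s2ge True by simp
              moreover have "(real r)^2 + 2 * (5/3)^2 - 5 * real r = (real r - 5/3) * (real r - 10/3)"
                by (simp add: algebra_simps power2_eq_square)
              ultimately have "(real r - 5/3) * (real r - 10/3) \<le> 0" by linarith
              moreover have "real r > 5/3" using rgt True by simp
              ultimately have "real r \<le> 10/3"
                by (smt (verit) mult_pos_pos)
              hence "r \<le> 3" by linarith
              moreover have "r \<ge> 2" using \<open>real r > 5/3\<close> by linarith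
              moreover have "even r" using rk by presburger
              ultimately have r2: "r = 2" by presburger
              hence "k = -1" using rk by simp
              hence tt: "t = -1 - s" using st(2) by simp
              have "s < 2" using rs r2 by simp
              have "2*s^2 + 2*t^2 = 6" using E2 True r2 by (simp add: n3r)
              moreover have "t^2 \<ge> (8/3)^2"
              proof -
                have "1 + s \<ge> 8/3" using sge True by simp
                hence "(8/3)^2 \<le> (1 + s)^2" by (intro power_mono) auto
                moreover have "t^2 = (1 + s)^2" unfolding tt by (simp add: power2_eq_square algebra_simps)
                ultimately show ?thesis by simp
              qed
              moreover have "s^2 \<ge> 0" by simp
              moreover have "(8/3::real)^2 = 64/9" by (simp add: power2_eq_square)
              ultimately show False by linarith
            next
              case False
              have "real n - 5 \<noteq> 0" using False by simp
              hence "u = (real r + 2 * real_of_int k) / (real n - 5)" using E1' by (simp add: field_simps)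
              hence "u \<in> \<rat>" by simp
              from rat_root_int[OF this uq] obtain z where z: "u = of_int z" by (auto elim: Ints_cases)
              have "(real n - 3) * u > 0" using E1u spos rpos by linarith
              hence upos: "u > 0" using unn by (cases "u = 0") auto
              hence "z \<ge> 1" using z by simp
              hence u1: "u \<ge> 1" using z by simp
              show False
              proof (cases "u = 1")
                case True
                have "real r + 2 * s = real n - 3" using E1u True by simp
                thus False using rs sge by linarith
              next
                case False
                hence "z \<ge> 2" using z \<open>z \<ge> 1\<close> by auto
                hence u2: "u \<ge> 2" using z by simp
                have nn3: "real n - 3 \<ge> 0" using n3 by simp
                have "(real n - 3) * u^2 \<ge> (real n - 3) * (2 * u)"
                  using u2 nn3 unn by (intro mult_left_mono) (auto simp: power2_eq_square)
                moreover have "t^2 = u^2" by (simp add: u_def)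
                hence "(real r)^2 + 2*s^2 + (real n - 3) * u^2 = real n * real r" using E2 n3r by simp
                moreover have "(real n - 3)*(2*u) = 2*(real r + 2*s)" using E1u by simp
                ultimately have A1: "(real r)^2 + 2*s^2 + 2 * (real r + 2*s) \<le> real n * real r"
                  by linarith
                have "(real n - 3) * 2 \<le> (real n - 3) * u" using mult_left_mono[OF u2 nn3] .
                hence "real r + 2*s \<ge> 2 * (real n - 3)"
                  using E1u by linarith
                hence "real n \<le> (real r + 2*s + 6) / 2" by simp
                hence "real r * real n \<le> real r * ((real r + 2*s + 6) / 2)"
                  using rpos by (intro mult_left_mono) auto
                hence "(real r)^2 + 2*s^2 + 2 * (real r + 2*s) \<le> real r * ((real r + 2*s + 6) / 2)"
                  using A1 by (simp add: mult.commute)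
                moreover have "real r * ((real r + 2*s + 6) / 2) - ((real r)^2 + 2*s^2 + 2 * (real r + 2*s))
                   = - ((real r - s - 1)^2 + 3*s^2 + 6*s - 1) / 2"
                  by (simp add: algebra_simps power2_eq_square)
                moreover have "(real r - s - 1)^2 + 3*s^2 + 6*s - 1 > 0"
                proof -
                  have "(real r - s - 1)^2 \<ge> 0" "s^2 \<ge> 0" by simp_all
                  moreover have "s \<ge> 1" using sge n1 by linarith
                  ultimately show ?thesis by linarith
                qed
                moreover have "\<And>X Y Z::real. Y \<le> X \<Longrightarrow> X - Y = - Z / 2 \<Longrightarrow> 0 < Z \<Longrightarrow> False" by linarith
                ultimately show False by blast
              qed
            qed
          qed
        qed
      qed
    qed
  qed
qed



interpretation of_real_poly_hom: map_poly_inj_idom_hom "of_real :: real \<Rightarrow> complex" ..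

lemma eig_cubic:
  fixes a :: "nat \<Rightarrow> nat \<Rightarrow> complex" and w :: "nat \<Rightarrow> complex"
  assumes ev: "\<forall>i<n. (\<Sum>j<n. a i j * w j) = \<mu> * w i"
    and colsum: "\<forall>j<n. (\<Sum>i<n. a i j) = r"
    and sq: "\<forall>i<n. \<forall>l<n. (\<Sum>j<n. a i j * a j l) = (if i = l then R else 0) + k * a i l + F"
    and nz: "i0 < n" "w i0 \<noteq> 0"
  shows "(\<mu> - r) * (\<mu>^2 - k*\<mu> - R) = 0"
proof -
  define S where "S = (\<Sum>j<n. w j)"
  have "\<mu> * S = (\<Sum>i<n. \<mu> * w i)" unfolding S_def by (simp add: sum_distrib_left)
  also have "\<dots> = (\<Sum>i<n. \<Sum>j<n. a i j * w j)" using ev by simp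
  also have "\<dots> = (\<Sum>j<n. \<Sum>i<n. a i j * w j)" by (rule sum.swap)
  also have "\<dots> = (\<Sum>j<n. (\<Sum>i<n. a i j) * w j)" by (simp add: sum_distrib_right)
  also have "\<dots> = (\<Sum>j<n. r * w j)" using colsum by simp
  also have "\<dots> = r * S" unfolding S_def by (simp add: sum_distrib_left)
  finally have muS: "\<mu> * S = r * S" .
  have row: "\<mu>^2 * w i = R * w i + k * \<mu> * w i + F * S" if i: "i < n" for i
  proof -
    have "\<mu>^2 * w i = \<mu> * (\<Sum>j<n. a i j * w j)" using ev i by (simp add: power2_eq_square)
    also have "\<dots> = (\<Sum>j<n. a i j * (\<mu> * w j))" by (simp add: sum_distrib_left algebra_simps)
    also have "\<dots> = (\<Sum>j<n. a i j * (\<Sum>l<n. a j l * w l))" using ev by simp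
    also have "\<dots> = (\<Sum>j<n. \<Sum>l<n. a i j * a j l * w l)" by (simp add: sum_distrib_left algebra_simps)
    also have "\<dots> = (\<Sum>l<n. \<Sum>j<n. a i j * a j l * w l)" by (rule sum.swap)
    also have "\<dots> = (\<Sum>l<n. (\<Sum>j<n. a i j * a j l) * w l)" by (simp add: sum_distrib_right)
    also have "\<dots> = (\<Sum>l<n. ((if i = l then R else 0) + k * a i l + F) * w l)" using sq i by simp
    also have "\<dots> = (\<Sum>l<n. (if i = l then R else 0) * w l) + k * (\<Sum>l<n. a i l * w l) + F * S"
      unfolding S_def by (simp add: distrib_right sum.distrib sum_distrib_left mult.assoc)
    also have "(\<Sum>l<n. (if i = l then R else 0) * w l) = (\<Sum>l<n. (if i = l then R * w l else 0))"
      by (rule sum.cong) auto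
    also have "\<dots> = R * w i" using i by simp
    also have "(\<Sum>l<n. a i l * w l) = \<mu> * w i" using ev i by simp
    finally show ?thesis by (simp add: mult.assoc)
  qed
  have "(\<mu> - r) * (\<mu>^2 - k*\<mu> - R) * w i0 = (\<mu> - r) * (\<mu>^2 * w i0 - k * \<mu> * w i0 - R * w i0)"
    by (simp add: algebra_simps)
  also have "\<dots> = (\<mu> - r) * (F * S)" using row[OF nz(1)] by simp
  also have "\<dots> = F * (\<mu> * S - r * S)" by (simp add: algebra_simps)
  also have "\<dots> = 0" using muS by simp
  finally show ?thesis using nz(2) by simp
qed

lemma complex_root_real:
  fixes \<mu> :: complex and r k R :: real
  assumes "(\<mu> - of_real r) * (\<mu>^2 - of_real k * \<mu> - of_real R) = 0" "R \<ge> 0"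
  shows "Im \<mu> = 0"
proof (cases "\<mu> = of_real r")
  case True thus ?thesis by simp
next
  case False
  hence eq: "\<mu>^2 - of_real k * \<mu> - of_real R = 0" using assms(1) by simp
  have im: "2 * Re \<mu> * Im \<mu> - k * Im \<mu> = 0"
    using arg_cong[OF eq, of Im] by (simp add: power2_eq_square)
  have re: "(Re \<mu>)^2 - (Im \<mu>)^2 - k * Re \<mu> - R = 0"
    using arg_cong[OF eq, of Re] by (simp add: power2_eq_square)
  show ?thesis
  proof (rule ccontr)
    assume ne: "Im \<mu> \<noteq> 0"
    from im have "(2 * Re \<mu> - k) * Im \<mu> = 0" by (simp add: algebra_simps)
    hence "Re \<mu> = k / 2" using ne by simp
    with re have "(Im \<mu>)^2 + R + k^2/4 = 0" by (simp add: power2_eq_square field_simps)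
    moreover have "(Im \<mu>)^2 > 0" using ne by simp
    moreover have "k^2/4 \<ge> 0" by simp
    ultimately show False using assms(2) by linarith
  qed
qed

lemma tr_comm:
  fixes X Y :: "'a::comm_ring_1 mat"
  assumes "X \<in> carrier_mat n n" "Y \<in> carrier_mat n n"
  shows "(\<Sum>i<n. (X*Y)$$(i,i)) = (\<Sum>i<n. (Y*X)$$(i,i))"
proof -
  have "(\<Sum>i<n. (X*Y)$$(i,i)) = (\<Sum>i<n. \<Sum>k<n. X$$(i,k) * Y$$(k,i))"
    using assms by (intro sum.cong) (auto simp: scalar_prod_def atLeast0LessThan)
  also have "\<dots> = (\<Sum>k<n. \<Sum>i<n. Y$$(k,i) * X$$(i,k))" by (subst sum.swap) (simp add: mult.commute)
  also have "\<dots> = (\<Sum>i<n. (Y*X)$$(i,i))"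
    using assms by (intro sum.cong) (auto simp: scalar_prod_def atLeast0LessThan)
  finally show ?thesis .
qed

lemma trace_schur:
  fixes A :: "real mat"
  assumes A: "A \<in> carrier_mat n n" and cp: "char_poly A = (\<Prod>e\<leftarrow>es. [:-e,1:])"
  shows "(\<Sum>i<n. A$$(i,i)) = sum_list es"
    and "(\<Sum>i<n. (A*A)$$(i,i)) = sum_list (map (\<lambda>x. x^2) es)"
proof -
  obtain B P Q where BPQ: "schur_decomposition A es = (B,P,Q)" by (cases "schur_decomposition A es") auto
  from schur_decomposition[OF A cp BPQ]
  have sim: "similar_mat_wit A B P Q" and ut: "upper_triangular B" and dg: "diag_mat B = es" by auto
  from sim A have car: "B \<in> carrier_mat n n" "P \<in> carrier_mat n n" "Q \<in> carrier_mat n n"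
    and PQ: "P * Q = 1\<^sub>m n" and QP: "Q * P = 1\<^sub>m n" and AP: "A = P * B * Q"
    unfolding similar_mat_wit_def Let_def by auto
  have trB: "(\<Sum>i<n. B$$(i,i)) = sum_list es"
    using car(1) unfolding dg[symmetric] diag_mat_def
    by (simp add: atLeast0LessThan[symmetric] interv_sum_list_conv_sum_set_nat)
  have BB: "(B*B)$$(i,i) = (B$$(i,i))^2" if i: "i < n" for i
  proof -
    have "(B*B)$$(i,i) = (\<Sum>k<n. B$$(i,k) * B$$(k,i))"
      using car i by (auto simp: scalar_prod_def atLeast0LessThan)
    also have "\<dots> = (\<Sum>k\<in>{i}. B$$(i,k) * B$$(k,i))"
    proof (rule sum.mono_neutral_right)
      show "\<forall>k\<in>{..<n} - {i}. B$$(i,k) * B$$(k,i) = 0"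
      proof
        fix k assume k: "k \<in> {..<n} - {i}"
        show "B$$(i,k) * B$$(k,i) = 0"
        proof (cases "k < i")
          case True thus ?thesis using ut car i by (auto simp: upper_triangular_def)
        next
          case False hence "i < k" using k by auto
          thus ?thesis using ut car k by (auto simp: upper_triangular_def)
        qed
      qed
    qed (use i in auto)
    finally show ?thesis by (simp add: power2_eq_square)
  qed
  have trBB: "(\<Sum>i<n. (B*B)$$(i,i)) = sum_list (map (\<lambda>x. x^2) es)"
  proof -
    have "(\<Sum>i<n. (B*B)$$(i,i)) = (\<Sum>i<n. (B$$(i,i))^2)" using BB by simp
    also have "\<dots> = sum_list (map (\<lambda>x. x^2) (diag_mat B))"
      using car(1) unfolding diag_mat_def
      by (simp add: atLeast0LessThan[symmetric] interv_sum_list_conv_sum_set_nat o_def)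
    finally show ?thesis using dg by simp
  qed
  have "(\<Sum>i<n. A$$(i,i)) = (\<Sum>i<n. (P * (B * Q))$$(i,i))" using AP car by (simp add: assoc_mult_mat mult_carrier_mat)
  also have "\<dots> = (\<Sum>i<n. ((B * Q) * P)$$(i,i))" by (rule tr_comm) (use car in auto)
  also have "(B * Q) * P = B" using car QP by (simp add: assoc_mult_mat mult_carrier_mat)
  finally show "(\<Sum>i<n. A$$(i,i)) = sum_list es" using trB by simp
  have BQ: "B * Q \<in> carrier_mat n n" using car by simp
  have PBQ: "P * (B * Q) \<in> carrier_mat n n" using car by simp
  have A': "A = P * (B * Q)" using AP car by (simp add: assoc_mult_mat)
  have "A * A = P * ((B * Q) * (P * (B * Q)))" unfolding A' by (rule assoc_mult_mat[OF car(2) BQ PBQ])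
  also have "(B * Q) * (P * (B * Q)) = B * (Q * (P * (B * Q)))" by (rule assoc_mult_mat[OF car(1) car(3) PBQ])
  also have "Q * (P * (B * Q)) = (Q * P) * (B * Q)" by (rule assoc_mult_mat[OF car(3) car(2) BQ, symmetric])
  also have "(Q * P) * (B * Q) = B * Q" using QP left_mult_one_mat[OF BQ] by simp
  also have "B * (B * Q) = (B * B) * Q" by (rule assoc_mult_mat[OF car(1) car(1) car(3), symmetric])
  finally have AA: "A * A = P * ((B * B) * Q)" .
  have "(\<Sum>i<n. (A*A)$$(i,i)) = (\<Sum>i<n. ((B * B * Q) * P)$$(i,i))" unfolding AA
    by (rule tr_comm) (use car in auto)
  also have "(B * B * Q) * P = (B * B) * (Q * P)" by (rule assoc_mult_mat[OF mult_carrier_mat[OF car(1) car(1)] car(3) car(2)])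
  also have "\<dots> = B * B" using QP right_mult_one_mat[of "B * B" n n] car by simp
  finally show "(\<Sum>i<n. (A*A)$$(i,i)) = sum_list (map (\<lambda>x. x^2) es)" using trBB by simp
qed



lemma real_split:
  fixes A :: "real mat" and r k R F :: real
  assumes A: "A \<in> carrier_mat n n"
    and sym: "\<forall>i<n. \<forall>j<n. A$$(i,j) = A$$(j,i)"
    and rowsum: "\<forall>i<n. (\<Sum>j<n. A$$(i,j)) = r"
    and sq: "\<forall>i<n. \<forall>l<n. (\<Sum>j<n. A$$(i,j) * A$$(j,l)) = (if i = l then R else 0) + k * A$$(i,l) + F"
    and Rnn: "R \<ge> 0"
  shows "\<exists>es. char_poly A = (\<Prod>e\<leftarrow>es. [:-e,1:]) \<and> length es = n \<and> (\<forall>e\<in>set es. (e - r)*(e^2 - k*e - R) = 0)"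
proof -
  define Ac where "Ac = map_mat complex_of_real A"
  have Ac: "Ac \<in> carrier_mat n n" using A by (simp add: Ac_def)
  have cpc: "char_poly Ac = map_poly of_real (char_poly A)" unfolding Ac_def by (rule of_real_hom.char_poly_hom[OF A])
  obtain as where as: "char_poly Ac = (\<Prod>a\<leftarrow>as. [:-a,1:])" "length as = n"
    using char_poly_factorized[OF Ac] by auto
  have root: "(a - of_real r) * (a^2 - of_real k * a - of_real R) = 0" if a: "a \<in> set as" for a
  proof -
    have "poly (char_poly Ac) a = 0" unfolding as(1) using a by (auto simp: poly_prod_list prod_list_zero_iff)
    hence "eigenvalue Ac a" using eigenvalue_root_char_poly[OF Ac] by simp
    then obtain v where v: "eigenvector Ac v a" unfolding eigenvalue_def by auto
    hence vc: "v \<in> carrier_vec n" "v \<noteq> 0\<^sub>v n" "Ac *\<^sub>v v = a \<cdot>\<^sub>v v" using Ac unfolding eigenvector_def by auto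
    obtain i0 where i0: "i0 < n" "v$i0 \<noteq> 0"
    proof -
      have "\<exists>i<n. v$i \<noteq> 0"
      proof (rule ccontr)
        assume "\<not> (\<exists>i<n. v$i \<noteq> 0)"
        hence "v = 0\<^sub>v n" using vc(1) by (intro eq_vecI) auto
        thus False using vc(2) by simp
      qed
      thus ?thesis using that by blast
    qed
    have ev: "\<forall>i<n. (\<Sum>j<n. complex_of_real (A$$(i,j)) * v$j) = a * v$i"
    proof (intro allI impI)
      fix i assume i: "i < n"
      have "(Ac *\<^sub>v v)$i = (a \<cdot>\<^sub>v v)$i" using vc(3) by simp
      thus "(\<Sum>j<n. complex_of_real (A$$(i,j)) * v$j) = a * v$i"
        using i A vc(1) by (simp add: Ac_def scalar_prod_def atLeast0LessThan)
    qed
    show ?thesis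
    proof (rule eig_cubic[OF ev _ _ i0])
      show "\<forall>j<n. (\<Sum>i<n. complex_of_real (A$$(i,j))) = of_real r"
      proof (intro allI impI)
        fix j assume j: "j < n"
        have "(\<Sum>i<n. complex_of_real (A$$(i,j))) = of_real (\<Sum>i<n. A$$(j,i))"
          using sym j by simp
        thus "(\<Sum>i<n. complex_of_real (A$$(i,j))) = of_real r" using rowsum j by simp
      qed
      show "\<forall>i<n. \<forall>l<n. (\<Sum>j<n. complex_of_real (A$$(i,j)) * complex_of_real (A$$(j,l)))
          = (if i = l then of_real R else 0) + of_real k * of_real (A$$(i,l)) + of_real F"
      proof (intro allI impI)
        fix i l assume i: "i < n" and l: "l < n"
        have "(\<Sum>j<n. complex_of_real (A$$(i,j)) * complex_of_real (A$$(j,l)))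
           = of_real (\<Sum>j<n. A$$(i,j) * A$$(j,l))" by simp
        also have "\<dots> = of_real ((if i = l then R else 0) + k * A$$(i,l) + F)" using sq i l by simp
        finally show "(\<Sum>j<n. complex_of_real (A$$(i,j)) * complex_of_real (A$$(j,l)))
          = (if i = l then of_real R else 0) + of_real k * of_real (A$$(i,l)) + of_real F" by simp
      qed
    qed
  qed
  have im: "\<forall>a\<in>set as. Im a = 0" using root complex_root_real Rnn by blast
  define es where "es = map Re as"
  have as_es: "as = map complex_of_real es" unfolding es_def using im
    by (induction as) (auto simp: complex_eq_iff)
  have "map_poly complex_of_real (char_poly A) = map_poly complex_of_real (\<Prod>e\<leftarrow>es. [:-e,1:])"
    using cpc as(1) as_es by (simp add: of_real_poly_hom.hom_prod_list o_def map_poly_pCons)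
  hence cp: "char_poly A = (\<Prod>e\<leftarrow>es. [:-e,1:])" by (rule of_real_poly_hom.injectivity)
  have "\<forall>e\<in>set es. (e - r)*(e^2 - k*e - R) = 0"
  proof
    fix e assume "e \<in> set es"
    hence "complex_of_real e \<in> set as" using as_es by simp
    from root[OF this] have "complex_of_real ((e - r)*(e^2 - k*e - R)) = 0" by simp
    thus "(e - r)*(e^2 - k*e - R) = 0" by (simp only: of_real_eq_0_iff)
  qed
  moreover have "length es = n" using as(2) es_def by simp
  ultimately show ?thesis using cp by blast
qed

lemma proots_linear_prod:
  fixes es :: "real list"
  shows "proots (\<Prod>e\<leftarrow>es. [:-e,1:]) = mset es"
proof (induction es)
  case Nil thus ?case by simp
next
  case (Cons a es)
  have nz: "(\<Prod>e\<leftarrow>es. [:-e,1:]) \<noteq> 0" by (auto simp: prod_list_zero_iff)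
  have "proots (\<Prod>e\<leftarrow>a#es. [:-e,1:]) = proots ([:-a,1:] * (\<Prod>e\<leftarrow>es. [:-e,1:]))" by simp
  also have "\<dots> = proots [:-a,1:] + proots (\<Prod>e\<leftarrow>es. [:-e,1:])" by (rule proots_mult) (use nz in auto)
  also have "\<dots> = {#a#} + mset es" using Cons by simp
  finally show ?case by simp
qed



lemma srg_facts:
  fixes n r e f :: nat and E :: "nat \<Rightarrow> nat \<Rightarrow> bool"
  assumes srg: "strongly_regular n E r e f" and n: "n \<ge> 1"
    and e'_def: "e' = (if \<exists>i<n. \<exists>j<n. i \<noteq> j \<and> E i j then e else 0)"
    and f'_def: "f' = (if \<exists>i<n. \<exists>j<n. i \<noteq> j \<and> \<not> E i j then f else 0)"
  shows "\<forall>i<n. \<forall>l<n. card (neighbours n E i \<inter> neighbours n E l) = (if i = l then r else if E i l then e' else f')"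
    and "f' \<le> r" and "r \<ge> 1 \<Longrightarrow> e' + 1 \<le> r"
proof -
  have sg: "\<forall>i<n. \<forall>j<n. E i j \<longleftrightarrow> E j i" "\<forall>i<n. \<not> E i i"
    using srg unfolding strongly_regular_def simple_graph_def by auto
  have deg: "\<forall>i<n. card (neighbours n E i) = r"
    and ce: "\<forall>i<n. \<forall>j<n. i \<noteq> j \<longrightarrow> E i j \<longrightarrow> card (neighbours n E i \<inter> neighbours n E j) = e"
    and cf: "\<forall>i<n. \<forall>j<n. i \<noteq> j \<longrightarrow> \<not> E i j \<longrightarrow> card (neighbours n E i \<inter> neighbours n E j) = f"
    using srg unfolding strongly_regular_def by auto
  have fin: "finite (neighbours n E i)" for i unfolding neighbours_def by simp
  show "\<forall>i<n. \<forall>l<n. card (neighbours n E i \<inter> neighbours n E l) = (if i = l then r else if E i l then e' else f')"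
  proof (intro allI impI)
    fix i l assume i: "i < n" and l: "l < n"
    show "card (neighbours n E i \<inter> neighbours n E l) = (if i = l then r else if E i l then e' else f')"
    proof (cases "i = l")
      case True thus ?thesis using deg i by simp
    next
      case False
      show ?thesis
      proof (cases "E i l")
        case True
        hence "e' = e" unfolding e'_def using i l False by auto
        thus ?thesis using ce i l False True by simp
      next
        case nE: False
        hence "f' = f" unfolding f'_def using i l False by auto
        thus ?thesis using cf i l False nE by simp
      qed
    qed
  qed
  show "f' \<le> r"
  proof (cases "\<exists>i<n. \<exists>j<n. i \<noteq> j \<and> \<not> E i j")
    case True
    then obtain i j where ij: "i < n" "j < n" "i \<noteq> j" "\<not> E i j" by auto
    have "f' = card (neighbours n E i \<inter> neighbours n E j)" using cf ij True f'_def by simp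
    also have "\<dots> \<le> card (neighbours n E i)" by (rule card_mono[OF fin]) auto
    finally show ?thesis using deg ij by simp
  next
    case False
    have "f' = 0" unfolding f'_def by (rule if_not_P[OF False])
    thus ?thesis by simp
  qed
  assume r1: "r \<ge> 1"
  have z: "0 < n" using n by simp
  have "card (neighbours n E 0) \<ge> 1" using deg z r1 by simp
  hence "neighbours n E 0 \<noteq> {}" by auto
  then obtain j where j: "j \<in> neighbours n E 0" by auto
  hence jn: "j < n" "E 0 j" unfolding neighbours_def by auto
  have j0: "j \<noteq> 0"
  proof
    assume "j = 0"
    with jn have "E 0 0" by simp
    with sg z show False by auto
  qed
  hence ee: "e' = e" unfolding e'_def using jn z by auto
  have "e = card (neighbours n E 0 \<inter> neighbours n E j)" using ce jn z j0 by simp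
  also have "\<dots> \<le> card (neighbours n E 0 - {j})"
  proof (rule card_mono)
    show "finite (neighbours n E 0 - {j})" using fin by simp
    show "neighbours n E 0 \<inter> neighbours n E j \<subseteq> neighbours n E 0 - {j}"
      using sg jn unfolding neighbours_def by auto
  qed
  also have "\<dots> = r - 1" using j deg z fin by simp
  finally show "e' + 1 \<le> r" using ee r1 by simp
qed

theorem theorem3p1:
  fixes n r e f :: nat and E :: "nat \<Rightarrow> nat \<Rightarrow> bool"
  assumes "strongly_regular n E r e f"
    and "n \<ge> 3"
  shows "lambda3 (adj_matrix n E) < real n / 3"
proof -
  note srg = assms(1)
  define e' where "e' = (if \<exists>i<n. \<exists>j<n. i \<noteq> j \<and> E i j then e else 0)"
  define f' where "f' = (if \<exists>i<n. \<exists>j<n. i \<noteq> j \<and> \<not> E i j then f else 0)"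
  have n1: "n \<ge> 1" using assms(2) by simp
  note facts = srg_facts[OF srg n1 e'_def f'_def]
  have sg: "\<forall>i<n. \<forall>j<n. E i j \<longleftrightarrow> E j i" "\<forall>i<n. \<not> E i i"
    using srg unfolding strongly_regular_def simple_graph_def by auto
  have deg: "\<forall>i<n. card (neighbours n E i) = r"
    using srg unfolding strongly_regular_def by auto
  define A where "A = adj_matrix n E"
  have A: "A \<in> carrier_mat n n" unfolding A_def adj_matrix_def by simp
  have Aij: "A$$(i,j) = (if E i j then 1 else 0)" if "i < n" "j < n" for i j
    using that unfolding A_def adj_matrix_def by simp
  have sym: "\<forall>i<n. \<forall>j<n. A$$(i,j) = A$$(j,i)" using Aij sg by auto
  have cardsum: "(\<Sum>j<n. (if P j then 1 else 0 :: real)) = real (card {j. j < n \<and> P j})" for P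
  proof -
    have "(\<Sum>j<n. (if P j then 1 else 0 :: real)) = (\<Sum>j\<in>{j\<in>{..<n}. P j}. 1)"
      using sum.inter_filter[of "{..<n}" "\<lambda>_. 1::real" P] by simp
    also have "{j\<in>{..<n}. P j} = {j. j < n \<and> P j}" by auto
    finally show ?thesis by simp
  qed
  have rowsum: "\<forall>i<n. (\<Sum>j<n. A$$(i,j)) = real r"
  proof (intro allI impI)
    fix i assume i: "i < n"
    have "(\<Sum>j<n. A$$(i,j)) = (\<Sum>j<n. (if E i j then 1 else 0 :: real))" using Aij i by simp
    also have "\<dots> = real (card (neighbours n E i))" unfolding cardsum neighbours_def by simp
    finally show "(\<Sum>j<n. A$$(i,j)) = real r" using deg i by simp
  qed
  define R where "R = real r - real f'"
  define k where "k = real e' - real f'"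
  have sq: "\<forall>i<n. \<forall>l<n. (\<Sum>j<n. A$$(i,j) * A$$(j,l)) = (if i = l then R else 0) + k * A$$(i,l) + real f'"
  proof (intro allI impI)
    fix i l assume i: "i < n" and l: "l < n"
    have "(\<Sum>j<n. A$$(i,j) * A$$(j,l)) = (\<Sum>j<n. (if E i j \<and> E l j then 1 else 0 :: real))"
      using Aij i l sg by (intro sum.cong) auto
    also have "\<dots> = real (card (neighbours n E i \<inter> neighbours n E l))"
      unfolding cardsum neighbours_def by (simp add: Collect_conj_eq[symmetric] conj_assoc) (metis (no_types, lifting) Collect_cong)
    also have "\<dots> = (if i = l then R else 0) + k * A$$(i,l) + real f'"
      using facts(1) i l Aij[OF i l] sg(2) i unfolding R_def k_def by auto
    finally show "(\<Sum>j<n. A$$(i,j) * A$$(j,l)) = (if i = l then R else 0) + k * A$$(i,l) + real f'" .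
  qed
  have Rnn: "R \<ge> 0" unfolding R_def using facts(2) by simp
  obtain es where es: "char_poly A = (\<Prod>e\<leftarrow>es. [:-e,1:])" "length es = n"
    "\<forall>e\<in>set es. (e - real r)*(e^2 - k*e - R) = 0"
    using real_split[OF A sym rowsum sq Rnn] by blast
  have tr1: "sum_list es = 0"
  proof -
    have "sum_list es = (\<Sum>i<n. A$$(i,i))" using trace_schur(1)[OF A es(1)] by simp
    also have "\<dots> = 0" using Aij sg(2) by simp
    finally show ?thesis .
  qed
  have tr2: "sum_list (map (\<lambda>x. x^2) es) = real n * real r"
  proof -
    have "sum_list (map (\<lambda>x. x^2) es) = (\<Sum>i<n. (A*A)$$(i,i))" using trace_schur(2)[OF A es(1)] by simp
    also have "\<dots> = (\<Sum>i<n. real r)"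
    proof (rule sum.cong)
      fix i assume "i \<in> {..<n}"
      hence i: "i < n" by simp
      have "(A*A)$$(i,i) = (\<Sum>j<n. A$$(i,j) * A$$(j,i))"
        using A i by (simp add: scalar_prod_def atLeast0LessThan)
      also have "\<dots> = R + k * A$$(i,i) + real f'" using sq i by simp
      also have "\<dots> = real r" using Aij[OF i i] sg(2) i unfolding R_def by simp
      finally show "(A*A)$$(i,i) = real r" .
    qed simp
    finally show ?thesis by simp
  qed
  have rin: "real r \<in> set es"
  proof -
    define one where "one = vec n (\<lambda>_. 1::real)"
    have "A *\<^sub>v one = real r \<cdot>\<^sub>v one"
    proof (rule eq_vecI)
      fix i assume "i < dim_vec (real r \<cdot>\<^sub>v one)"
      hence i: "i < n" unfolding one_def by simp
      have "(A *\<^sub>v one) $ i = (\<Sum>j<n. A$$(i,j))"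
        using A i unfolding one_def by (simp add: scalar_prod_def atLeast0LessThan)
      thus "(A *\<^sub>v one) $ i = (real r \<cdot>\<^sub>v one) $ i" using rowsum i unfolding one_def by simp
    qed (use A in \<open>simp add: one_def\<close>)
    moreover have "one \<noteq> 0\<^sub>v n"
    proof
      assume "one = 0\<^sub>v n"
      hence "one $ 0 = (0\<^sub>v n :: real vec) $ 0" by simp
      thus False using n1 unfolding one_def by simp
    qed
    ultimately have "eigenvector A one (real r)" using A unfolding eigenvector_def one_def by simp
    hence "eigenvalue A (real r)" unfolding eigenvalue_def by auto
    hence "poly (char_poly A) (real r) = 0" using eigenvalue_root_char_poly[OF A] by simp
    hence "poly (\<Prod>e\<leftarrow>es. [:-e,1:]) (real r) = 0" using es(1) by simp
    thus ?thesis by (auto simp: poly_prod_list prod_list_zero_iff)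
  qed
  define L where "L = rev (sort es)"
  have ev: "eigenvalues_desc A = L"
    unfolding eigenvalues_desc_def L_def es(1) proots_linear_prod by simp
  have mL: "mset L = mset es" unfolding L_def by simp
  have lenL: "length L = n" using es(2) unfolding L_def by simp
  have srt: "sorted_wrt (\<lambda>x y. y \<le> x) L" unfolding L_def by (simp add: sorted_wrt_rev)
  have sL: "sum_list L = 0" using tr1 mL by (metis sum_mset_sum_list)
  have s2L: "sum_list (map (\<lambda>x. x^2) L) = real n * real r"
    using tr2 mL by (metis mset_map sum_mset_sum_list)
  have setL: "set L = set es" unfolding L_def by simp
  have rinL: "real r \<in> set L" using rin setL by simp
  have roots: "\<forall>x\<in>set L. x = real r \<or> x^2 - real_of_int (int e' - int f') * x - real_of_int (int r - int f') = 0"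
  proof
    fix x assume "x \<in> set L"
    hence "(x - real r)*(x^2 - k*x - R) = 0" using es(3) setL by simp
    thus "x = real r \<or> x^2 - real_of_int (int e' - int f') * x - real_of_int (int r - int f') = 0"
      unfolding k_def R_def by simp
  qed
  have "L!2 < real n / 3"
    by (rule final_arith[OF lenL assms(2) srt sL s2L rinL roots refl refl facts(2) facts(3)])
  thus ?thesis unfolding lambda3_def A_def[symmetric] ev .
qed


end
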